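(* Consider a particular run of Algorithm 1 (parameter $\alpha \in (0,1/2)$). Let $\zeta$ be a constant such that $-\frac{\zeta}{w_i^t} \le \partial_i L^t(\mathbf{w}^t) \le \zeta$ for all $i \in [m]$, $t \in [T]$. Then for every $i, t$, \[(w_i^t)^{\alpha - 1} - \left(\frac{1}{w_i^t} + 1\right)\eta_t \zeta \le (w_i^{t+1})^{\alpha-1} \le (w_i^t)^{\alpha-1} + \left(\frac{1}{\min_k w_k^t} + 1\right)\eta_t \zeta.\] Furthermore, if $\eta_t \zeta \le (1-\alpha)^2 (w_i^t)^\alpha$ for all $i$, then for every $i$, \[(w_i^{t+1})^{\alpha-1} \le (w_i^t)^{\alpha-1} + (m+1)\eta_t \zeta.\]
   Context: Setting. There are $m$ experts and $n$ outcomes; $\Delta^k$ denotes the probability simplex in $\mathbb{R}^k$. For reports $\mathbf{p}^1, \dots, \mathbf{p}^m \in \Delta^n$ and $\mathbf{w} \in \Delta^m$, the logarithmic pool is $p^*_j(\mathbf{w}) = \frac{\prod_{k} (p^k_j)^{w_k}}{\sum_{\ell=1}^n \prod_{k} (p^k_\ell)^{w_k}}$. At each time $t\in[T]$, reports $\mathbf{p}^{t,1},\dots,\mathbf{p}^{t,m}$ and an outcome $j_t$ are revealed, with loss $L^t(\mathbf{w}) := -\ln p^*_{j_t}(\mathbf{w})$ and, by convention, $\partial_i L^t(\mathbf{w}) := \sum_{\ell=1}^n p^*_\ell(\mathbf{w}) \ln p^{t,i}_\ell - \ln p^{t,i}_{j_t}$. Algorithm 1 (parameter $\alpha \in (0,1/2)$):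 $R(\mathbf{w}) = -\frac{1}{\alpha}\sum_i w_i^\alpha$, $\eta = \frac{1}{\sqrt{T}\ln T}\cdot\frac{1}{12 m^{(1+\alpha)/2} n}$, $\mathbf{w}^1 = (1/m,\dots,1/m)$, $\eta_0 = +\infty$. For $t = 1,\dots,T$: if $\eta \le \min_i (w_i^t)^\alpha$ set $\eta_t = \min(\eta_{t-1}, \eta)$, else $\eta_t = \min(\eta_{t-1}, \min_i w_i^t)$; then $\mathbf{w}^{t+1} \in \Delta^m$ is defined by $-(w_i^{t+1})^{\alpha-1} = -(w_i^t)^{\alpha-1} - \eta_t \partial_i L^t(\mathbf{w}^t) + c$ for all $i$, with $c \in \mathbb{R}$ the unique constant making $\sum_i w_i^{t+1} = 1$. *)

theory Defs
  imports Complex_Main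
begin

text \<open>Experts are indexed by 0..<m, outcomes by 0..<n, time steps by 1..T.
  Reports: p t k l is the probability expert k assigns to outcome l at time t;
  jt t is the realized outcome at time t; weights w t i.\<close>

definition in_simplex :: "nat \<Rightarrow> (nat \<Rightarrow> real) \<Rightarrow> bool" where
  "in_simplex k x \<longleftrightarrow> (\<forall>i<k. 0 \<le> x i) \<and> (\<Sum>i<k. x i) = 1"

definition log_pool :: "nat \<Rightarrow> nat \<Rightarrow> (nat \<Rightarrow> nat \<Rightarrow> real) \<Rightarrow> (nat \<Rightarrow> real) \<Rightarrow> nat \<Rightarrow> real" where
  "log_pool m n q w j =
     (\<Prod>k<m. q k j powr w k) / (\<Sum>l<n. \<Prod>k<m. q k l powr w k)"

definition partial_loss ::
  "nat \<Rightarrow> nat \<Rightarrow> (nat \<Rightarrow> nat \<Rightarrow> real) \<Rightarrow> nat \<Rightarrow> (nat \<Rightarrow> real) \<Rightarrow> nat \<Rightarrow> real" where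
  "partial_loss m n q j w i =
     (\<Sum>l<n. log_pool m n q w l * ln (q i l)) - ln (q i j)"

definition alg1_eta :: "nat \<Rightarrow> nat \<Rightarrow> nat \<Rightarrow> real \<Rightarrow> real" where
  "alg1_eta m n T \<alpha> =
     1 / (sqrt (real T) * ln (real T)) * (1 / (12 * real m powr ((1 + \<alpha>) / 2) * real n))"

definition min_weight :: "nat \<Rightarrow> (nat \<Rightarrow> real) \<Rightarrow> real" where
  "min_weight m x = Min (x ` {..<m})"

text \<open>A run of Algorithm 1: weights w t (t = 1..T+1) and learning rates eta_t (t = 1..T),
  with eta_0 = +infinity (so at t = 1 the min with eta_0 is omitted).
  The weights must lie in the (relative interior of the) simplex, since the update
  involves negative powers of the weights.\<close>
definition alg1_run ::
  "nat \<Rightarrow> nat \<Rightarrow> nat \<Rightarrow> real \<Rightarrow> (nat \<Rightarrow> nat \<Rightarrow> nat \<Rightarrow> real) \<Rightarrow> (nat \<Rightarrow> nat)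
     \<Rightarrow> (nat \<Rightarrow> nat \<Rightarrow> real) \<Rightarrow> (nat \<Rightarrow> real) \<Rightarrow> bool" where
  "alg1_run m n T \<alpha> p jt w \<eta> \<longleftrightarrow>
     (\<forall>i<m. w 1 i = 1 / real m) \<and>
     (\<forall>t\<in>{1..T}.
        \<eta> t = (let cand = (if alg1_eta m n T \<alpha> \<le> min_weight m (\<lambda>i. w t i powr \<alpha>)
                           then alg1_eta m n T \<alpha> else min_weight m (w t))
               in if t = 1 then cand else min (\<eta> (t - 1)) cand) \<and>
        in_simplex m (w (t + 1)) \<and> (\<forall>i<m. 0 < w (t + 1) i) \<and>
        (\<exists>c::real. \<forall>i<m.
           - (w (t + 1) i powr (\<alpha> - 1)) =
             - (w t i powr (\<alpha> - 1)) - \<eta> t * partial_loss m n (p t) (jt t) (w t) i + c))"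

end

theory Submission
  imports Defs "HOL-Analysis.Analysis"
begin

lemma bracket_ineq:
  fixes \<alpha> \<delta> U Mx :: real
  assumes "0 < \<alpha>" "\<alpha> < 1" "0 \<le> \<delta>" "0 < U" "0 \<le> Mx" "\<delta> \<le> (1-\<alpha>)^2 * U"
  shows "((2-\<alpha>)/(\<alpha>-1)) * ((\<alpha>-1)*U + \<delta>)^2 + (U + \<delta>*Mx - \<delta>) * ((\<alpha>-1)*(\<alpha>-2)*U - 2*\<delta>) \<ge> 0"
proof -
  have id: "(1-\<alpha>) * (((2-\<alpha>)/(\<alpha>-1)) * ((\<alpha>-1)*U + \<delta>)^2 + (U + \<delta>*Mx - \<delta>) * ((\<alpha>-1)*(\<alpha>-2)*U - 2*\<delta>))
     = \<alpha>*\<delta>*((1-\<alpha>)^2*U-\<delta>) + (1-\<alpha>)*\<delta>*Mx*((1-\<alpha>)*(2-\<alpha>)*U-2*\<delta>)"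
    using assms by (simp add: field_simps power2_eq_square)
  have a: "\<alpha>*\<delta>*((1-\<alpha>)^2*U-\<delta>) \<ge> 0" using assms by simp
  have "(1-\<alpha>)*(2-\<alpha>)*U-2*\<delta> \<ge> 0"
  proof -
    have "2*\<delta> \<le> 2*(1-\<alpha>)^2*U" using assms by simp
    also have "\<dots> \<le> (1-\<alpha>)*(2-\<alpha>)*U" using assms by (simp add: power2_eq_square mult_right_mono)
    finally show ?thesis by simp
  qed
  hence b: "(1-\<alpha>)*\<delta>*Mx*((1-\<alpha>)*(2-\<alpha>)*U-2*\<delta>) \<ge> 0" using assms by simp
  have "(1-\<alpha>) * (((2-\<alpha>)/(\<alpha>-1)) * ((\<alpha>-1)*U + \<delta>)^2 + (U + \<delta>*Mx - \<delta>) * ((\<alpha>-1)*(\<alpha>-2)*U - 2*\<delta>)) \<ge> 0"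
    using id a b by linarith
  thus ?thesis using assms by (simp add: zero_le_mult_iff)
qed

lemma tangent_F:
  fixes \<alpha> \<delta> M a x p :: real
  assumes al: "0 < \<alpha>" "\<alpha> < 1" and d: "0 \<le> \<delta>" and M: "0 \<le> M" and a: "0 < a"
    and da: "\<delta> \<le> (1-\<alpha>)^2 * a powr \<alpha>" and x: "a \<le> x" and p: "a \<le> p"
  defines "y \<equiv> \<lambda>x. x powr (\<alpha>-1) + \<delta>*M - \<delta>/x"
  defines "y' \<equiv> \<lambda>x. (\<alpha>-1) * x powr (\<alpha>-1-1) + \<delta>/x^2"
  defines "y'' \<equiv> \<lambda>x. (\<alpha>-1) * (\<alpha>-1-1) * x powr (\<alpha>-1-1-1) - 2*\<delta>/x^3"
  defines "q \<equiv> 1/(\<alpha>-1)"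
  defines "F \<equiv> \<lambda>x. y x powr q"
  defines "F' \<equiv> \<lambda>x. q * y x powr (q-1) * y' x"
  defines "F'' \<equiv> \<lambda>x. q * ((q-1) * y x powr (q-1-1) * y' x * y' x + y x powr (q-1) * y'' x)"
  shows "F x \<le> F p + F' p * (x - p)"
proof -
  let ?C = "{a..}"
  have Cpos: "z \<in> ?C \<Longrightarrow> 0 < z" for z using a by auto
  have dz: "\<delta> \<le> (1-\<alpha>)^2 * z powr \<alpha>" if "z \<in> ?C" for z
  proof -
    have "a powr \<alpha> \<le> z powr \<alpha>" using that a al by (intro powr_mono2) auto
    thus ?thesis using da by (smt (verit) mult_left_mono zero_le_power2)
  qed
  have Uz: "z powr (\<alpha>-1) = z powr \<alpha> / z" if "0 < z" for z
    using that by (simp add: powr_diff)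
  have Uz2: "z powr (\<alpha>-1-1) = z powr \<alpha> / z^2" if "0 < z" for z
    using that by (simp add: powr_diff power2_eq_square)
  have Uz3: "z powr (\<alpha>-1-1-1) = z powr \<alpha> / z^3" if "0 < z" for z
    using that by (simp add: powr_diff power3_eq_cube)
  have ypos: "0 < y z" if "z \<in> ?C" for z
  proof -
    have z: "0 < z" using Cpos that .
    have U: "0 < z powr \<alpha>" using z by simp
    have "\<delta>/z \<le> (1-\<alpha>)^2 * z powr \<alpha> / z" using dz[OF that] z by (simp add: divide_right_mono)
    also have "\<dots> < z powr \<alpha> / z"
    proof -
      have "(1-\<alpha>)^2 < 1" using al by (simp add: power2_eq_square) (smt (verit) mult_less_cancel_right2 mult_nonneg_nonneg)
      thus ?thesis using U z by (simp add: divide_strict_right_mono)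
    qed
    finally show ?thesis unfolding y_def using Uz[OF z] d M by (smt (verit) mult_nonneg_nonneg)
  qed
  have dy: "(y has_real_derivative y' z) (at z)" if "z \<in> ?C" for z
    using Cpos[OF that] unfolding y_def y'_def
    by (auto intro!: derivative_eq_intros simp: power2_eq_square field_simps)
  have dy': "(y' has_real_derivative y'' z) (at z)" if "z \<in> ?C" for z
    using Cpos[OF that] unfolding y'_def y''_def
    by (auto intro!: derivative_eq_intros simp: power2_eq_square power3_eq_cube field_simps)
  have dF: "((\<lambda>z. - F z) has_real_derivative - F' z) (at z)" if "z \<in> ?C" for z
  proof -
    have "((\<lambda>z. y z powr q) has_real_derivative q * y z powr (q - 1) * y' z) (at z)"
      using DERIV_fun_powr[OF dy[OF that] ypos[OF that], of q] by simp
    thus ?thesis unfolding F_def F'_def by (rule DERIV_minus)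
  qed
  have dF': "((\<lambda>z. - F' z) has_real_derivative - F'' z) (at z)" if "z \<in> ?C" for z
  proof -
    have h1: "((\<lambda>z. y z powr (q-1)) has_real_derivative (q-1) * y z powr (q-1-1) * y' z) (at z)"
      using DERIV_fun_powr[OF dy[OF that] ypos[OF that], of "q-1"] by simp
    have h2: "((\<lambda>z. q * y z powr (q-1) * y' z) has_real_derivative F'' z) (at z)"
      by (rule DERIV_cong[OF DERIV_mult[OF DERIV_cmult[OF h1] dy'[OF that]]])
         (simp add: F''_def algebra_simps)
    show ?thesis unfolding F'_def by (rule DERIV_minus[OF h2])
  qed
  have F''neg: "0 \<le> - F'' z" if "z \<in> ?C" for z
  proof -
    have z: "0 < z" using Cpos that .
    have yz: "0 < y z" using ypos that .
    let ?U = "z powr \<alpha>"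
    have U: "0 < ?U" using z by simp
    have e1: "z * y z = ?U + \<delta>*(M*z) - \<delta>" unfolding y_def using Uz[OF z] z by (simp add: field_simps)
    have e2: "z^2 * y' z = (\<alpha>-1)*?U + \<delta>" unfolding y'_def using Uz2[OF z] z by (simp add: field_simps)
    have e3: "z^3 * y'' z = (\<alpha>-1)*(\<alpha>-2)*?U - 2*\<delta>" unfolding y''_def using Uz3[OF z] z by (simp add: field_simps)
    have qm1: "q - 1 = (2-\<alpha>)/(\<alpha>-1)" unfolding q_def using al by (simp add: field_simps)
    have B: "(q-1) * (z^2 * y' z)^2 + (z * y z) * (z^3 * y'' z) \<ge> 0"
      unfolding e1 e2 e3 qm1 using bracket_ineq[OF al(1) al(2) d U _ dz[OF that], of "M*z"] M z by simp
    have B2: "(q-1) * y' z * y' z + y z * y'' z \<ge> 0"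
    proof -
      have "(q-1) * (z^2 * y' z)^2 + (z * y z) * (z^3 * y'' z) = z^4 * ((q-1) * y' z * y' z + y z * y'' z)"
        by (simp add: power2_eq_square power3_eq_cube power4_eq_xxxx algebra_simps)
      thus ?thesis using B z by (simp add: zero_le_mult_iff)
    qed
    have yq: "y z powr (q-1) = y z powr (q-1-1) * y z" using yz by (simp add: powr_diff power2_eq_square)
    have "F'' z = q * (y z powr (q-1-1) * ((q-1) * y' z * y' z + y z * y'' z))"
      unfolding F''_def yq by (simp add: algebra_simps)
    moreover have "q < 0" unfolding q_def using al by simp
    moreover have "0 \<le> y z powr (q-1-1) * ((q-1) * y' z * y' z + y z * y'' z)" using B2 by simp
    ultimately show ?thesis by (simp add: mult_nonpos_nonneg)
  qed
  have "(- F') p * (x - p) \<le> - F x - - F p"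
    using f''_imp_f'[of ?C "\<lambda>z. - F z" "\<lambda>z. - F' z" "\<lambda>z. - F'' z" p x] dF dF' F''neg x p
    by (auto simp: convex_real_interval)
  thus ?thesis by simp
qed

lemma y_pos:
  fixes \<alpha> \<delta> M z :: real
  assumes al: "0 < \<alpha>" "\<alpha> < 1" and d: "0 \<le> \<delta>" and M: "0 \<le> M" and z: "0 < z"
    and dz: "\<delta> \<le> (1-\<alpha>)^2 * z powr \<alpha>"
  shows "0 < z powr (\<alpha>-1) + \<delta>*M - \<delta>/z"
proof -
  have U: "0 < z powr \<alpha>" using z by simp
  have Uz: "z powr (\<alpha>-1) = z powr \<alpha> / z" using z by (simp add: powr_diff)
  have "\<delta>/z \<le> (1-\<alpha>)^2 * z powr \<alpha> / z" using dz z by (simp add: divide_right_mono)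
  also have "\<dots> < z powr \<alpha> / z"
  proof -
    have "(1-\<alpha>)^2 < 1" using al by (simp add: power2_eq_square) (smt (verit) mult_less_cancel_right2 mult_nonneg_nonneg)
    thus ?thesis using U z by (simp add: divide_strict_right_mono)
  qed
  finally show ?thesis using Uz d M by (smt (verit) mult_nonneg_nonneg)
qed

lemma tangent_cor:
  fixes \<alpha> \<delta> M a :: real
  assumes al: "0 < \<alpha>" "\<alpha> < 1" and d: "0 \<le> \<delta>" and M: "0 < M" and a: "0 < a"
    and da: "\<delta> \<le> (1-\<alpha>)^2 * a powr \<alpha>" and p: "a \<le> 1/M"
  shows "\<exists>K. \<forall>x\<ge>a. (x powr (\<alpha>-1) + \<delta>*M - \<delta>/x) powr (1/(\<alpha>-1)) \<le> 1/M + K * (x - 1/M)"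
proof -
  let ?p = "1/M"
  have pp: "0 < ?p" using M by simp
  have "(?p powr (\<alpha>-1) + \<delta>*M - \<delta>/?p) powr (1/(\<alpha>-1)) = ?p"
    using M al by (simp add: powr_powr)
  then show ?thesis
    using tangent_F[OF al d less_imp_le[OF M] a da _ p] by metis
qed
theorem lemma2:
  fixes m n T :: nat and \<alpha> \<zeta> :: real
    and p :: "nat \<Rightarrow> nat \<Rightarrow> nat \<Rightarrow> real" and jt :: "nat \<Rightarrow> nat"
    and w :: "nat \<Rightarrow> nat \<Rightarrow> real" and \<eta> :: "nat \<Rightarrow> real"
  assumes "m \<ge> 1" and "n \<ge> 1"
    and "0 < \<alpha>" and "\<alpha> < 1/2"
    and reports: "\<And>t k. t \<in> {1..T} \<Longrightarrow> k < m \<Longrightarrow> in_simplex n (p t k) \<and> (\<forall>l<n. 0 < p t k l)"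
    and outcomes: "\<And>t. t \<in> {1..T} \<Longrightarrow> jt t < n"
    and run: "alg1_run m n T \<alpha> p jt w \<eta>"
    and zeta: "\<And>t i. t \<in> {1..T} \<Longrightarrow> i < m \<Longrightarrow>
        - \<zeta> / w t i \<le> partial_loss m n (p t) (jt t) (w t) i \<and>
        partial_loss m n (p t) (jt t) (w t) i \<le> \<zeta>"
  shows "\<forall>t\<in>{1..T}.
           (\<forall>i<m.
              w t i powr (\<alpha> - 1) - (1 / w t i + 1) * \<eta> t * \<zeta> \<le> w (t + 1) i powr (\<alpha> - 1) \<and>
              w (t + 1) i powr (\<alpha> - 1) \<le> w t i powr (\<alpha> - 1) + (1 / min_weight m (w t) + 1) * \<eta> t * \<zeta>) \<and>
           ((\<forall>i<m. \<eta> t * \<zeta> \<le> (1 - \<alpha>)^2 * w t i powr \<alpha>) \<longrightarrow>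
              (\<forall>i<m. w (t + 1) i powr (\<alpha> - 1) \<le> w t i powr (\<alpha> - 1) + (real m + 1) * \<eta> t * \<zeta>))"
proof -
  have m0: "0 < m" using assms(1) by simp
  have al: "0 < \<alpha>" "\<alpha> < 1" using assms(3,4) by auto
  note R = run[unfolded alg1_run_def]
  have w1: "\<And>i. i < m \<Longrightarrow> w 1 i = 1 / real m" using R by blast
  have RT: "\<And>t. t \<in> {1..T} \<Longrightarrow> in_simplex m (w (t + 1)) \<and> (\<forall>i<m. 0 < w (t + 1) i) \<and>
        (\<exists>c::real. \<forall>i<m.
           - (w (t + 1) i powr (\<alpha> - 1)) =
             - (w t i powr (\<alpha> - 1)) - \<eta> t * partial_loss m n (p t) (jt t) (w t) i + c)"
    using R by blast
  have Reta: "\<And>t. t \<in> {1..T} \<Longrightarrow> \<eta> t = (let cand = (if alg1_eta m n T \<alpha> \<le> min_weight m (\<lambda>i. w t i powr \<alpha>)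
                           then alg1_eta m n T \<alpha> else min_weight m (w t))
               in if t = 1 then cand else min (\<eta> (t - 1)) cand)"
    using R by blast
  have wpos: "0 < w t i" if "t \<in> {1..T}" "i < m" for t i
  proof (cases "t = 1")
    case True thus ?thesis using w1 that m0 by simp
  next
    case False
    then have "t - 1 \<in> {1..T}" "t - 1 + 1 = t" using that by auto
    thus ?thesis using RT[of "t-1"] that by metis
  qed
  have wsum: "(\<Sum>i<m. w t i) = 1" if "t \<in> {1..T}" for t
  proof (cases "t = 1")
    case True thus ?thesis using w1 m0 by simp
  next
    case False
    then have "t - 1 \<in> {1..T}" "t - 1 + 1 = t" using that by auto
    thus ?thesis using RT[of "t-1"] unfolding in_simplex_def by metis
  qed
  have minpos: "0 < min_weight m (w t)" if "t \<in> {1..T}" for t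
    unfolding min_weight_def using wpos[OF that] m0 by (subst Min_gr_iff) auto
  have eta_base: "0 \<le> alg1_eta m n T \<alpha>" if "1 \<le> T"
    unfolding alg1_eta_def using that by (auto intro!: mult_nonneg_nonneg divide_nonneg_nonneg)
  have etapos: "t \<in> {1..T} \<longrightarrow> 0 \<le> \<eta> t" for t
  proof (induction t)
    case 0 thus ?case by simp
  next
    case (Suc k)
    show ?case
    proof
      assume st: "Suc k \<in> {1..T}"
      have cand: "0 \<le> (if alg1_eta m n T \<alpha> \<le> min_weight m (\<lambda>i. w (Suc k) i powr \<alpha>)
                           then alg1_eta m n T \<alpha> else min_weight m (w (Suc k)))"
        using eta_base minpos[OF st] st by (auto simp: less_imp_le)
      show "0 \<le> \<eta> (Suc k)"
      proof (cases "k = 0")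
        case True thus ?thesis using Reta[OF st] cand by (simp add: Let_def)
      next
        case False
        hence "k \<in> {1..T}" using st by auto
        hence "0 \<le> \<eta> k" using Suc.IH by blast
        thus ?thesis using Reta[OF st] cand False by (simp add: Let_def)
      qed
    qed
  qed
  have zpos: "0 \<le> \<zeta>" if "t \<in> {1..T}" for t
  proof -
    have "- \<zeta> / w t 0 \<le> \<zeta>" using zeta[OF that m0] by linarith
    thus ?thesis using wpos[OF that m0] by (smt (verit) divide_pos_pos)
  qed
  show ?thesis
  proof
    fix t assume t: "t \<in> {1..T}"
    define x where "x = w t"
    define x' where "x' = w (t+1)"
    define g where "g = partial_loss m n (p t) (jt t) (w t)"
    define e where "e = \<alpha> - 1"
    define \<delta> where "\<delta> = \<eta> t * \<zeta>"
    define a where "a = min_weight m (w t)"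
    have e: "e < 0" unfolding e_def using al by simp
    have xpos: "\<And>i. i < m \<Longrightarrow> 0 < x i" unfolding x_def using wpos t by auto
    have x'pos: "\<And>i. i < m \<Longrightarrow> 0 < x' i" unfolding x'_def using RT[OF t] by auto
    have xs: "(\<Sum>i<m. x i) = 1" unfolding x_def using wsum t by auto
    have x's: "(\<Sum>i<m. x' i) = 1" unfolding x'_def using RT[OF t] unfolding in_simplex_def by auto
    have eta: "0 \<le> \<eta> t" using etapos t by blast
    have z: "0 \<le> \<zeta>" using zpos t by blast
    have d: "0 \<le> \<delta>" unfolding \<delta>_def using eta z by simp
    have apos: "0 < a" unfolding a_def using minpos t by blast
    have ale: "\<And>i. i < m \<Longrightarrow> a \<le> x i" unfolding a_def x_def min_weight_def by simp
    have ain: "\<exists>k<m. a = x k" unfolding a_def x_def min_weight_def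
    proof -
      have "Min (w t ` {..<m}) \<in> w t ` {..<m}" using m0 by (intro Min_in) auto
      thus "\<exists>k<m. Min (w t ` {..<m}) = w t k" by auto
    qed
    have gb: "\<And>i. i < m \<Longrightarrow> - \<zeta> / x i \<le> g i \<and> g i \<le> \<zeta>" unfolding g_def x_def using zeta t by blast
    have glo: "- \<delta> / x i \<le> \<eta> t * g i" if "i < m" for i
    proof -
      have "\<eta> t * (- \<zeta> / x i) \<le> \<eta> t * g i" using gb[OF that] eta by (intro mult_left_mono) auto
      thus ?thesis unfolding \<delta>_def by simp
    qed
    have ghi: "\<eta> t * g i \<le> \<delta>" if "i < m" for i
      unfolding \<delta>_def using gb[OF that] eta by (simp add: mult_left_mono)
    obtain c where c: "\<And>i. i < m \<Longrightarrow> - (x' i powr e) = - (x i powr e) - \<eta> t * g i + c"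
      using RT[OF t] unfolding x_def x'_def g_def e_def by blast
    have upd: "\<And>i. i < m \<Longrightarrow> x' i powr e = x i powr e + \<eta> t * g i - c"
      using c by (smt (verit))
    obtain j where j: "j < m" "x j \<le> x' j"
    proof (rule ccontr)
      assume "\<not> thesis"
      hence "\<And>i. i < m \<Longrightarrow> x' i < x i" using that by force
      hence "(\<Sum>i<m. x' i) < (\<Sum>i<m. x i)" using m0 by (intro sum_strict_mono) auto
      thus False using xs x's by simp
    qed
    obtain k where k: "k < m" "x' k \<le> x k"
    proof (rule ccontr)
      assume "\<not> thesis"
      hence "\<And>i. i < m \<Longrightarrow> x i < x' i" using that by force
      hence "(\<Sum>i<m. x i) < (\<Sum>i<m. x' i)" using m0 by (intro sum_strict_mono) auto
      thus False using xs x's by simp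
    qed
    have "x' j powr e \<le> x j powr e" using j xpos e by (intro powr_mono2') auto
    hence c1: "\<eta> t * g j \<le> c" using upd[OF j(1)] by simp
    have "x k powr e \<le> x' k powr e" using k x'pos e by (intro powr_mono2') auto
    hence c2: "c \<le> \<eta> t * g k" using upd[OF k(1)] by simp
    have cup: "c \<le> \<delta>" using c2 ghi[OF k(1)] by simp
    have "\<delta> / x j \<le> \<delta> / a" using ale[OF j(1)] apos d by (simp add: divide_left_mono)
    hence clo: "- \<delta> / a \<le> c" using c1 glo[OF j(1)] by simp
    have part1: "\<forall>i<m.
              w t i powr (\<alpha> - 1) - (1 / w t i + 1) * \<eta> t * \<zeta> \<le> w (t + 1) i powr (\<alpha> - 1) \<and>
              w (t + 1) i powr (\<alpha> - 1) \<le> w t i powr (\<alpha> - 1) + (1 / min_weight m (w t) + 1) * \<eta> t * \<zeta>"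
    proof (intro allI impI conjI)
      fix i assume i: "i < m"
      have "x i powr e - (\<delta> / x i + \<delta>) \<le> x' i powr e" using upd[OF i] glo[OF i] cup by simp
      moreover have "(1 / w t i + 1) * \<eta> t * \<zeta> = \<delta> / x i + \<delta>" unfolding \<delta>_def x_def
        by (simp add: field_simps)
      ultimately show "w t i powr (\<alpha> - 1) - (1 / w t i + 1) * \<eta> t * \<zeta> \<le> w (t + 1) i powr (\<alpha> - 1)"
        unfolding x_def x'_def e_def by simp
      have "x' i powr e \<le> x i powr e + (\<delta> / a + \<delta>)" using upd[OF i] ghi[OF i] clo by simp
      moreover have "(1 / min_weight m (w t) + 1) * \<eta> t * \<zeta> = \<delta> / a + \<delta>" unfolding \<delta>_def a_def
        by (simp add: field_simps)
      ultimately show "w (t + 1) i powr (\<alpha> - 1) \<le> w t i powr (\<alpha> - 1) + (1 / min_weight m (w t) + 1) * \<eta> t * \<zeta>"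
        unfolding x_def x'_def e_def by simp
    qed
    have part2: "(\<forall>i<m. \<eta> t * \<zeta> \<le> (1 - \<alpha>)^2 * w t i powr \<alpha>) \<longrightarrow>
              (\<forall>i<m. w (t + 1) i powr (\<alpha> - 1) \<le> w t i powr (\<alpha> - 1) + (real m + 1) * \<eta> t * \<zeta>)"
    proof (intro impI allI)
      assume cond0: "\<forall>i<m. \<eta> t * \<zeta> \<le> (1 - \<alpha>)^2 * w t i powr \<alpha>"
      have cond: "\<And>i. i < m \<Longrightarrow> \<delta> \<le> (1 - \<alpha>)^2 * x i powr \<alpha>" using cond0 unfolding \<delta>_def x_def by blast
      have da: "\<delta> \<le> (1-\<alpha>)^2 * a powr \<alpha>" using ain cond by auto
      have "real m * a \<le> 1"
      proof -
        have "(\<Sum>i<m. a) \<le> (\<Sum>i<m. x i)" using ale by (intro sum_mono) auto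
        thus ?thesis using xs by simp
      qed
      hence ap: "a \<le> 1 / real m" using m0 by (simp add: field_simps)
      obtain K where K: "\<And>z. a \<le> z \<Longrightarrow> (z powr (\<alpha>-1) + \<delta>*real m - \<delta>/z) powr (1/(\<alpha>-1)) \<le> 1/real m + K * (z - 1/real m)"
        using tangent_cor[OF al d _ apos da ap] m0 by auto
      have cbig: "- (real m * \<delta>) \<le> c"
      proof (rule ccontr)
        assume "\<not> ?thesis"
        hence cl: "c < - (real m * \<delta>)" by simp
        have lt: "x' i < 1/real m + K * (x i - 1/real m)" if i: "i < m" for i
        proof -
          have yp: "0 < x i powr e + \<delta> * real m - \<delta> / x i"
            unfolding e_def using y_pos[OF al d _ xpos[OF i] cond[OF i]] by simp
          have "x i powr e + \<delta> * real m - \<delta> / x i < x' i powr e"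
            using upd[OF i] glo[OF i] cl by (simp add: algebra_simps)
          hence "(x' i powr e) powr (1/e) < (x i powr e + \<delta> * real m - \<delta> / x i) powr (1/e)"
            using yp e by (intro powr_less_mono2_neg) auto
          moreover have "(x' i powr e) powr (1/e) = x' i" using e x'pos[OF i] by (simp add: powr_powr)
          ultimately show ?thesis using K[OF ale[OF i]] unfolding e_def by simp
        qed
        have "(\<Sum>i<m. x' i) < (\<Sum>i<m. 1/real m + K * (x i - 1/real m))"
          using m0 lt by (intro sum_strict_mono) auto
        also have "\<dots> = 1 + K * ((\<Sum>i<m. x i) - 1)"
          using m0 by (simp add: sum.distrib sum_distrib_left[symmetric] sum_subtractf)
        also have "\<dots> = 1" using xs by simp
        finally show False using x's by simp
      qed
      fix i assume "i < m"
      hence "x' i powr e \<le> x i powr e + \<delta> + real m * \<delta>" using upd ghi cbig by (smt (verit))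
      moreover have "(real m + 1) * \<eta> t * \<zeta> = \<delta> + real m * \<delta>" unfolding \<delta>_def by (simp add: algebra_simps)
      ultimately show "w (t + 1) i powr (\<alpha> - 1) \<le> w t i powr (\<alpha> - 1) + (real m + 1) * \<eta> t * \<zeta>"
        unfolding x_def x'_def e_def by simp
    qed
    show "(\<forall>i<m.
              w t i powr (\<alpha> - 1) - (1 / w t i + 1) * \<eta> t * \<zeta> \<le> w (t + 1) i powr (\<alpha> - 1) \<and>
              w (t + 1) i powr (\<alpha> - 1) \<le> w t i powr (\<alpha> - 1) + (1 / min_weight m (w t) + 1) * \<eta> t * \<zeta>) \<and>
           ((\<forall>i<m. \<eta> t * \<zeta> \<le> (1 - \<alpha>)^2 * w t i powr \<alpha>) \<longrightarrow>
              (\<forall>i<m. w (t + 1) i powr (\<alpha> - 1) \<le> w t i powr (\<alpha> - 1) + (real m + 1) * \<eta> t * \<zeta>))"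
      using part1 part2 by blast
  qed
qed

end
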